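(* Fix $0\le\alpha\le1$ and a collection $\mathcal X$ of finite sets. If $0<\beta_0\le\beta$ and $D_{\alpha,\beta_0}$ is a metric on $\mathcal X$, then $D_{\alpha,\beta}$ is a metric on $\mathcal X$. That is, the set of $\beta>0$ for which $D_{\alpha,\beta}$ is a metric on $\mathcal X$ is upward closed.
   Context: For finite sets $X,Y$ let $m(X,Y)=\min\{|X\setminus Y|,|Y\setminus X|\}$ and $M(X,Y)=\max\{|X\setminus Y|,|Y\setminus X|\}$. For $0\le\alpha\le1$ and $\beta>0$, $$D_{\alpha,\beta}(X,Y)=\begin{cases}\beta\,\dfrac{\alpha m(X,Y)+(1-\alpha)M(X,Y)}{|X\cap Y|+\beta\big(\alpha m(X,Y)+(1-\alpha)M(X,Y)\big)} & \text{if } X\cup Y\neq\emptyset,\\[2mm] 0 & \text{if } X=Y=\emptyset.\end{cases}$$ *)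

theory Defs
  imports Complex_Main
begin

definition mdiff :: "'a set \<Rightarrow> 'a set \<Rightarrow> nat" where
  "mdiff X Y = min (card (X - Y)) (card (Y - X))"

definition Mdiff :: "'a set \<Rightarrow> 'a set \<Rightarrow> nat" where
  "Mdiff X Y = max (card (X - Y)) (card (Y - X))"

definition D :: "real \<Rightarrow> real \<Rightarrow> 'a set \<Rightarrow> 'a set \<Rightarrow> real" where
  "D \<alpha> \<beta> X Y =
     (if X \<union> Y = {} then 0
      else \<beta> * (\<alpha> * real (mdiff X Y) + (1 - \<alpha>) * real (Mdiff X Y)) /
           (real (card (X \<inter> Y)) + \<beta> * (\<alpha> * real (mdiff X Y) + (1 - \<alpha>) * real (Mdiff X Y))))"

definition is_metric_on :: "'b set \<Rightarrow> ('b \<Rightarrow> 'b \<Rightarrow> real) \<Rightarrow> bool" where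
  "is_metric_on C d \<longleftrightarrow>
     (\<forall>x\<in>C. \<forall>y\<in>C. d x y \<ge> 0) \<and>
     (\<forall>x\<in>C. \<forall>y\<in>C. d x y = 0 \<longleftrightarrow> x = y) \<and>
     (\<forall>x\<in>C. \<forall>y\<in>C. d x y = d y x) \<and>
     (\<forall>x\<in>C. \<forall>y\<in>C. \<forall>z\<in>C. d x z \<le> d x y + d y z)"

end

theory Submission
  imports Defs
begin

definition hh :: "real \<Rightarrow> real \<Rightarrow> real" where
  "hh t x = t * x / (1 + (t - 1) * x)"

lemma key:
  fixes I f b0 b :: real
  assumes "I \<ge> 0" "f \<ge> 0" "b0 > 0" "b0 \<le> b"
  shows "b*f/(I+b*f) = hh (b/b0) (b0*f/(I+b0*f))"
proof (cases "I + b0*f = 0")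
  case True
  then have "f = 0" using assms
    by (smt (verit, best) mult_pos_pos)
  then show ?thesis by (simp add: hh_def)
next
  case False
  then have p: "I + b0*f > 0" using assms by (smt (verit) mult_nonneg_nonneg)
  have q: "I + b*f > 0" using assms p by (smt (verit) mult_right_mono)
  have a1: "(b/b0 - 1) * (b0*f/(I+b0*f)) = (b-b0)*f/(I+b0*f)"
    using assms p by (simp add: divide_simps)
  have a2: "1 + (b-b0)*f/(I+b0*f) = (I+b0*f + (b-b0)*f)/(I+b0*f)"
    using p by (simp add: field_simps)
  have a3: "I+b0*f + (b-b0)*f = I + b*f" by (simp add: algebra_simps)
  have "1 + (b/b0 - 1) * (b0*f/(I+b0*f)) = (I + b*f)/(I+b0*f)"
    unfolding a1 a2 a3 by (rule refl)
  moreover have "(b/b0) * (b0*f/(I+b0*f)) = b*f/(I+b0*f)" using assms by simp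
  ultimately have "hh (b/b0) (b0*f/(I+b0*f)) = (b*f/(I+b0*f)) / ((I + b*f)/(I+b0*f))"
    unfolding hh_def by (simp only:)
  also have "\<dots> = b*f/(I+b*f)" using p q by (simp add: divide_simps)
  finally show ?thesis by simp
qed

lemma hh_nonneg: "t \<ge> 1 \<Longrightarrow> x \<ge> 0 \<Longrightarrow> hh t x \<ge> 0"
  unfolding hh_def by simp

lemma hh_zero: "t \<ge> 1 \<Longrightarrow> x \<ge> 0 \<Longrightarrow> hh t x = 0 \<longleftrightarrow> x = 0"
  unfolding hh_def by (simp add: add_nonneg_eq_0_iff)

lemma hh_mono: assumes "t \<ge> 1" "0 \<le> a" "a \<le> a'" shows "hh t a \<le> hh t a'"
proof -
  have d1: "1 + (t-1)*a > 0" "1 + (t-1)*a' > 0" using assms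
    by (smt (verit) mult_nonneg_nonneg)+
  have "t*a*(1 + (t-1)*a') \<le> t*a'*(1 + (t-1)*a)"
    using assms by (simp add: algebra_simps mult_left_mono)
  then show ?thesis unfolding hh_def using d1 by (simp add: divide_simps)
qed

lemma hh_sub: assumes "t \<ge> 1" "0 \<le> b" "0 \<le> c" shows "hh t (b+c) \<le> hh t b + hh t c"
proof -
  have d: "1 + (t-1)*b > 0" "1 + (t-1)*c > 0" "1 + (t-1)*(b+c) > 0" using assms
    by (smt (verit) mult_nonneg_nonneg)+
  have "t*b/(1 + (t-1)*(b+c)) \<le> t*b/(1 + (t-1)*b)"
    using d assms by (intro divide_left_mono) (auto simp: mult_left_mono)
  moreover have "t*c/(1 + (t-1)*(b+c)) \<le> t*c/(1 + (t-1)*c)"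
    using d assms by (intro divide_left_mono) (auto simp: mult_left_mono)
  ultimately show ?thesis unfolding hh_def by (simp add: distrib_left add_divide_distrib)
qed

theorem mainTheorem6:
  fixes \<X> :: "'a set set" and \<alpha> \<beta>\<^sub>0 \<beta> :: real
  assumes "0 \<le> \<alpha>" and "\<alpha> \<le> 1"
    and "\<forall>X\<in>\<X>. finite X"
    and "0 < \<beta>\<^sub>0" and "\<beta>\<^sub>0 \<le> \<beta>"
    and "is_metric_on \<X> (D \<alpha> \<beta>\<^sub>0)"
  shows "is_metric_on \<X> (D \<alpha> \<beta>)"
proof -
  define t where "t = \<beta> / \<beta>\<^sub>0"
  have t1: "t \<ge> 1" using assms(4,5) unfolding t_def by simp
  have eq: "D \<alpha> \<beta> X Y = hh t (D \<alpha> \<beta>\<^sub>0 X Y)" for X Y :: "'a set"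
  proof (cases "X \<union> Y = {}")
    case True then have "D \<alpha> \<beta> X Y = 0" "D \<alpha> \<beta>\<^sub>0 X Y = 0" unfolding D_def by (rule if_P)+
    then show ?thesis by (simp add: hh_def)
  next
    case False
    have f: "\<alpha> * real (mdiff X Y) + (1 - \<alpha>) * real (Mdiff X Y) \<ge> 0"
      using assms(1,2) by simp
    define F where "F = \<alpha> * real (mdiff X Y) + (1 - \<alpha>) * real (Mdiff X Y)"
    define I where "I = real (card (X \<inter> Y))"
    have e1: "D \<alpha> \<beta> X Y = \<beta>*F/(I+\<beta>*F)"
      unfolding D_def F_def I_def by (rule if_not_P[OF False])
    have e2: "D \<alpha> \<beta>\<^sub>0 X Y = \<beta>\<^sub>0*F/(I+\<beta>\<^sub>0*F)"
      unfolding D_def F_def I_def by (rule if_not_P[OF False])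
    show ?thesis unfolding e1 e2 t_def
      by (rule key[OF _ f[folded F_def] assms(4,5)]) (simp add: I_def)
  qed
  have M1: "\<And>x y. x\<in>\<X> \<Longrightarrow> y\<in>\<X> \<Longrightarrow> D \<alpha> \<beta>\<^sub>0 x y \<ge> 0"
    and M2: "\<And>x y. x\<in>\<X> \<Longrightarrow> y\<in>\<X> \<Longrightarrow> D \<alpha> \<beta>\<^sub>0 x y = 0 \<longleftrightarrow> x = y"
    and M3: "\<And>x y. x\<in>\<X> \<Longrightarrow> y\<in>\<X> \<Longrightarrow> D \<alpha> \<beta>\<^sub>0 x y = D \<alpha> \<beta>\<^sub>0 y x"
    and M4: "\<And>x y z. x\<in>\<X> \<Longrightarrow> y\<in>\<X> \<Longrightarrow> z\<in>\<X> \<Longrightarrow> D \<alpha> \<beta>\<^sub>0 x z \<le> D \<alpha> \<beta>\<^sub>0 x y + D \<alpha> \<beta>\<^sub>0 y z"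
    using assms(6) unfolding is_metric_on_def by blast+
  show ?thesis unfolding is_metric_on_def eq
  proof (intro conjI ballI)
    fix x y assume xy: "x \<in> \<X>" "y \<in> \<X>"
    show "hh t (D \<alpha> \<beta>\<^sub>0 x y) \<ge> 0" by (rule hh_nonneg[OF t1 M1[OF xy]])
    show "hh t (D \<alpha> \<beta>\<^sub>0 x y) = 0 \<longleftrightarrow> x = y"
      using hh_zero[OF t1 M1[OF xy]] M2[OF xy] by simp
    show "hh t (D \<alpha> \<beta>\<^sub>0 x y) = hh t (D \<alpha> \<beta>\<^sub>0 y x)" using M3[OF xy] by simp
  next
    fix x y z assume xyz: "x \<in> \<X>" "y \<in> \<X>" "z \<in> \<X>"
    have "hh t (D \<alpha> \<beta>\<^sub>0 x z) \<le> hh t (D \<alpha> \<beta>\<^sub>0 x y + D \<alpha> \<beta>\<^sub>0 y z)"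
      by (rule hh_mono[OF t1 M1[OF xyz(1,3)] M4[OF xyz]])
    also have "\<dots> \<le> hh t (D \<alpha> \<beta>\<^sub>0 x y) + hh t (D \<alpha> \<beta>\<^sub>0 y z)"
      by (rule hh_sub[OF t1 M1[OF xyz(1,2)] M1[OF xyz(2,3)]])
    finally show "hh t (D \<alpha> \<beta>\<^sub>0 x z) \<le> hh t (D \<alpha> \<beta>\<^sub>0 x y) + hh t (D \<alpha> \<beta>\<^sub>0 y z)" .
  qed
qed

end
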